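(* Let $G$ be a graph and $uv\in E(G)$. Let $W_1=N(u)\setminus N[v]$, $W_2=N(u)\cap N(v)$, $W_3=N(v)\setminus N[u]$ and $W_4=V(G)\setminus (N[u]\cup N[v])$. Suppose there is no maximal induced matching $M$ of $G$ with $V(M)\subseteq W_1\cup W_4$ and $V(M)\cap W_1\ne\emptyset$, and there is no maximal induced matching $M$ of $G$ with $V(M)\subseteq W_3\cup W_4$ and $V(M)\cap W_3\neq\emptyset$. Then $|M_{G_{u\to v}}|\ge |M_G|$ or $|M_{G_{v\to u}}|\ge |M_G|$.
   Context: Graphs are finite, simple, undirected. $N(x)$, $N[x]$ are the open and closed neighborhoods. An induced matching is a matching whose endpoints induce a $1$-regular subgraph; it is maximal if not properly contained in another induced matching; $M_G$ is the set of maximal induced matchings of $G$; $V(M)$ is the set of vertices covered by $M$. For $uv\in E(G)$, $G_{v\to u}$ is the graph obtained from $G$ by deleting the edge $vx$ for every $x\in N(v)\setminus N[u]$ and adding the edge $vy$ for every $y\in N(u)\setminus N[v]$ (so that $N[v]=N[u]$ afterwards); $G_{u\to v}$ is defined symmetrically. *)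

theory Defs
  imports Main
begin

definition simple_graph :: "'a set \<Rightarrow> 'a set set \<Rightarrow> bool" where
  "simple_graph V E \<longleftrightarrow> finite V \<and> (\<forall>e\<in>E. \<exists>x y. x \<noteq> y \<and> e = {x, y} \<and> x \<in> V \<and> y \<in> V)"

definition nbhd :: "'a set set \<Rightarrow> 'a \<Rightarrow> 'a set" where
  "nbhd E x = {y. {x, y} \<in> E}"

definition cnbhd :: "'a set set \<Rightarrow> 'a \<Rightarrow> 'a set" where
  "cnbhd E x = insert x (nbhd E x)"

definition covered :: "'a set set \<Rightarrow> 'a set" where
  "covered M = \<Union>M"

definition matching :: "'a set set \<Rightarrow> 'a set set \<Rightarrow> bool" where
  "matching E M \<longleftrightarrow> M \<subseteq> E \<and> (\<forall>e\<in>M. \<forall>f\<in>M. e \<noteq> f \<longrightarrow> e \<inter> f = {})"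

definition induced_matching :: "'a set set \<Rightarrow> 'a set set \<Rightarrow> bool" where
  "induced_matching E M \<longleftrightarrow> matching E M \<and>
     (\<forall>x\<in>covered M. card (nbhd E x \<inter> covered M) = 1)"

definition maximal_induced_matching :: "'a set set \<Rightarrow> 'a set set \<Rightarrow> bool" where
  "maximal_induced_matching E M \<longleftrightarrow> induced_matching E M \<and>
     \<not> (\<exists>M'. induced_matching E M' \<and> M \<subset> M')"

definition MIM :: "'a set set \<Rightarrow> 'a set set set" where
  "MIM E = {M. maximal_induced_matching E M}"

text \<open>G_{v->u}: delete vx for x in N(v) \ N[u], add vy for y in N(u) \ N[v]
  (vertex set unchanged; only the edge set changes).\<close>
definition shift :: "'a set set \<Rightarrow> 'a \<Rightarrow> 'a \<Rightarrow> 'a set set" where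
  "shift E v u = (E - {{v, x} | x. x \<in> nbhd E v - cnbhd E u})
                  \<union> {{v, y} | y. y \<in> nbhd E u - cnbhd E v}"

end

theory Submission
  imports Defs
begin

definition sg :: "'a set set \<Rightarrow> bool" where
  "sg E \<longleftrightarrow> (\<forall>e\<in>E. \<exists>x y. x \<noteq> y \<and> e = {x, y})"

lemma sg_single: "sg E \<Longrightarrow> {x} \<notin> E"
proof
  assume "sg E" "{x} \<in> E"
  then obtain a b where ab: "a \<noteq> b" "{x} = {a,b}" unfolding sg_def by blast
  then have "a \<in> {x}" "b \<in> {x}" by blast+
  then show False using ab(1) by blast
qed

lemma sg_simple: "simple_graph V E \<Longrightarrow> sg E"
  unfolding simple_graph_def sg_def by blast

lemma fin_simple: "simple_graph V E \<Longrightarrow> finite E"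
proof -
  assume a: "simple_graph V E"
  have "E \<subseteq> Pow V"
  proof
    fix e assume "e \<in> E"
    then obtain x y where "e = {x,y}" "x \<in> V" "y \<in> V" using a unfolding simple_graph_def by blast
    then show "e \<in> Pow V" by simp
  qed
  moreover have "finite V" using a unfolding simple_graph_def by simp
  ultimately show ?thesis using finite_subset by (metis finite_Pow_iff)
qed

lemma im_two:
  assumes "induced_matching E M" "x \<in> covered M" "y \<in> covered M" "z \<in> covered M"
    "{x,y} \<in> E" "{x,z} \<in> E"
  shows "y = z"
proof -
  have "card (nbhd E x \<inter> covered M) = 1" using assms unfolding induced_matching_def by blast
  then obtain a where a: "nbhd E x \<inter> covered M = {a}" by (meson card_1_singletonE)
  have "y \<in> nbhd E x \<inter> covered M" "z \<in> nbhd E x \<inter> covered M"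
    using assms unfolding nbhd_def by auto
  then show ?thesis using a by auto
qed

lemma im_match: "induced_matching E M \<Longrightarrow> e \<in> M \<Longrightarrow> f \<in> M \<Longrightarrow> x \<in> e \<Longrightarrow> x \<in> f \<Longrightarrow> e = f"
  unfolding induced_matching_def matching_def by blast

lemma im_subE: "induced_matching E M \<Longrightarrow> M \<subseteq> E"
  unfolding induced_matching_def matching_def by blast

lemma sg_other:
  assumes "sg E" "e \<in> E" "x \<in> e"
  shows "\<exists>y. e = {x,y} \<and> x \<noteq> y"
proof -
  obtain a b where ab: "a \<noteq> b" "e = {a,b}" using assms unfolding sg_def by blast
  show ?thesis
  proof (cases "x = a")
    case True
    then show ?thesis using ab by blast
  next
    case False
    then have "x = b" using ab assms(3) by blast
    then show ?thesis using ab by (metis insert_commute)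
  qed
qed

lemma im_sub:
  assumes sg: "sg E" and im: "induced_matching E M'" and sub: "M \<subseteq> M'"
  shows "induced_matching E M"
proof -
  have ME: "M \<subseteq> E" using im_subE[OF im] sub by (rule order.trans[rotated])
  have disj: "\<forall>e\<in>M. \<forall>f\<in>M. e \<noteq> f \<longrightarrow> e \<inter> f = {}"
    using im sub unfolding induced_matching_def matching_def by blast
  have cM': "covered M \<subseteq> covered M'" using sub unfolding covered_def by blast
  have card1: "card (nbhd E x \<inter> covered M) = 1" if x: "x \<in> covered M" for x
  proof -
    obtain e where e: "e \<in> M" "x \<in> e" using x unfolding covered_def by blast
    obtain y where y: "e = {x,y}" "x \<noteq> y" using sg_other[OF sg _ e(2)] e(1) ME by blast
    have yE: "{x,y} \<in> E" using y e ME by blast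
    have yc: "y \<in> covered M" using y e unfolding covered_def by blast
    have "nbhd E x \<inter> covered M = {y}"
    proof
      show "{y} \<subseteq> nbhd E x \<inter> covered M" using yE yc unfolding nbhd_def by simp
      show "nbhd E x \<inter> covered M \<subseteq> {y}"
      proof
        fix z assume z: "z \<in> nbhd E x \<inter> covered M"
        then have "{x,z} \<in> E" unfolding nbhd_def by simp
        moreover have "x \<in> covered M'" "y \<in> covered M'" "z \<in> covered M'" using x yc z cM' by blast+
        ultimately have "y = z" using im_two[OF im] yE by blast
        then show "z \<in> {y}" by simp
      qed
    qed
    then show ?thesis by simp
  qed
  show ?thesis unfolding induced_matching_def matching_def using ME disj card1 by blast
qed

lemma im_transfer:
  assumes im: "induced_matching E M" and sub: "M \<subseteq> E'"
    and ag: "\<forall>x\<in>covered M. \<forall>y\<in>covered M. ({x,y}\<in>E) = ({x,y}\<in>E')"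
  shows "induced_matching E' M"
proof -
  have "nbhd E' x \<inter> covered M = nbhd E x \<inter> covered M" if "x \<in> covered M" for x
    using ag that unfolding nbhd_def by auto
  then show ?thesis using im sub unfolding induced_matching_def matching_def by auto
qed

lemma mim_iff:
  assumes sg: "sg E"
  shows "maximal_induced_matching E M \<longleftrightarrow>
    induced_matching E M \<and> (\<forall>e. e \<notin> M \<longrightarrow> \<not> induced_matching E (insert e M))"
proof
  assume "maximal_induced_matching E M"
  then show "induced_matching E M \<and> (\<forall>e. e \<notin> M \<longrightarrow> \<not> induced_matching E (insert e M))"
    unfolding maximal_induced_matching_def by blast
next
  assume a: "induced_matching E M \<and> (\<forall>e. e \<notin> M \<longrightarrow> \<not> induced_matching E (insert e M))"
  have "\<not> (\<exists>M'. induced_matching E M' \<and> M \<subset> M')"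
  proof
    assume "\<exists>M'. induced_matching E M' \<and> M \<subset> M'"
    then obtain M' e where "induced_matching E M'" "M \<subseteq> M'" "e \<in> M'" "e \<notin> M" by blast
    then have "induced_matching E (insert e M)" using im_sub[OF sg] by blast
    then show False using a \<open>e \<notin> M\<close> by blast
  qed
  then show "maximal_induced_matching E M" using a unfolding maximal_induced_matching_def by blast
qed

lemma ext_exists:
  assumes fin: "finite E" and im: "induced_matching E M"
  shows "\<exists>M'. M \<subseteq> M' \<and> maximal_induced_matching E M'"
proof -
  let ?S = "{M'. induced_matching E M' \<and> M \<subseteq> M'}"
  have "?S \<subseteq> Pow E" using im_subE by blast
  then have "finite ?S" using fin finite_subset by (metis finite_Pow_iff)
  moreover have "?S \<noteq> {}" using im by blast
  ultimately obtain m where m: "m \<in> ?S" "\<forall>b\<in>?S. m \<le> b \<longrightarrow> m = b"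
    using finite_has_maximal[of ?S] by blast
  have "maximal_induced_matching E m"
    unfolding maximal_induced_matching_def using m by blast
  then show ?thesis using m by blast
qed

lemma finite_MIM: "finite E \<Longrightarrow> finite (MIM E)"
proof -
  assume f: "finite E"
  have "MIM E \<subseteq> Pow E" unfolding MIM_def maximal_induced_matching_def using im_subE by blast
  then show ?thesis using f finite_subset by (metis finite_Pow_iff)
qed


lemma shift_mem: "e \<in> shift E u v \<longleftrightarrow>
   (e \<in> E \<and> \<not> (\<exists>x. e = {u,x} \<and> x \<in> nbhd E u - cnbhd E v)) \<or> (\<exists>y. e = {u,y} \<and> y \<in> nbhd E v - cnbhd E u)"
  unfolding shift_def by blast

lemma shift_sub1: "e \<in> shift E u v \<Longrightarrow> u \<notin> e \<Longrightarrow> e \<in> E"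
  unfolding shift_mem by blast

lemma shift_sub2: "e \<in> E \<Longrightarrow> u \<notin> e \<Longrightarrow> e \<in> shift E u v"
  unfolding shift_mem by blast

lemma shift_other: "u \<notin> {x,y} \<Longrightarrow> ({x,y} \<in> shift E u v) = ({x,y} \<in> E)"
  using shift_sub1[of "{x,y}" E u v] shift_sub2[of "{x,y}" E u v] by blast

lemma sg_shift: "sg E \<Longrightarrow> sg (shift E u v)"
proof -
  assume sg: "sg E"
  show "sg (shift E u v)" unfolding sg_def
  proof
    fix e assume "e \<in> shift E u v"
    then consider "e \<in> E" | y where "e = {u,y}" "y \<in> nbhd E v - cnbhd E u" unfolding shift_mem by blast
    then show "\<exists>x y. x \<noteq> y \<and> e = {x, y}"
    proof cases
      case 1 then show ?thesis using sg unfolding sg_def by blast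
    next
      case 2
      then have "y \<noteq> u" unfolding cnbhd_def by blast
      then show ?thesis using 2 by blast
    qed
  qed
qed

lemma shift_u:
  assumes sg: "sg E" and uv: "{u,v} \<in> E" and xu: "x \<noteq> u"
  shows "({u,x} \<in> shift E u v) = ({v,x} \<in> E \<or> x = v)"
proof -
  have eq: "\<And>z. ({u,x} = {u,z}) = (x = z)" using xu by (metis doubleton_eq_iff)
  have s1: "({u,x} \<in> shift E u v) = (({u,x} \<in> E \<and> \<not> (x \<in> nbhd E u - cnbhd E v)) \<or> x \<in> nbhd E v - cnbhd E u)"
    by (simp add: shift_mem eq)
  show ?thesis
  proof (cases "x = v")
    case True
    then show ?thesis using s1 uv unfolding nbhd_def cnbhd_def by simp
  next
    case False
    have "({v,x} \<in> E) = ({x,v} \<in> E)" by (simp add: insert_commute)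
    then show ?thesis using s1 False xu unfolding nbhd_def cnbhd_def by blast
  qed
qed

definition tr :: "'a \<Rightarrow> 'a \<Rightarrow> 'a \<Rightarrow> 'a" where
  "tr u v x = (if x = u then v else if x = v then u else x)"

lemma tr_tr: "tr u v (tr u v x) = x"
  unfolding tr_def by auto

lemma tr_u: "tr u v u = v" and tr_v: "tr u v v = u" and tr_o: "x \<noteq> u \<Longrightarrow> x \<noteq> v \<Longrightarrow> tr u v x = x"
  unfolding tr_def by auto

lemma shift_tr:
  assumes sg: "sg E" and uv: "{u,v} \<in> E"
  shows "({tr u v x, tr u v y} \<in> shift E u v) = ({x,y} \<in> shift E u v)"
proof -
  let ?H = "shift E u v"
  have sgH: "sg ?H" using sg_shift[OF sg] .
  have A: "({u,w} \<in> ?H) = ({v,w} \<in> ?H)" if "w \<noteq> u" "w \<noteq> v" for w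
    using shift_u[OF sg uv, of w] shift_other[of u v w E v] that by auto
  have C: "\<And>a b. {a,b} = {b,a}" by (rule insert_commute)
  show ?thesis
  proof (cases "x = y")
    case True
    then show ?thesis using sg_single[OF sgH] by simp
  next
    case False
    consider "x = u" | "x = v" | "x \<noteq> u" "x \<noteq> v" by blast
    then show ?thesis
    proof cases
      case 1
      consider "y = v" | "y \<noteq> u" "y \<noteq> v" using False 1 by blast
      then show ?thesis
      proof cases
        case a: 1 show ?thesis unfolding 1 a tr_u tr_v using C[of u v] by simp
      next
        case a: 2 show ?thesis unfolding 1 tr_u tr_o[OF a] using A[OF a] by simp
      qed
    next
      case 2
      consider "y = u" | "y \<noteq> u" "y \<noteq> v" using False 2 by blast
      then show ?thesis
      proof cases
        case a: 1 show ?thesis unfolding 2 a tr_u tr_v using C[of u v] by simp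
      next
        case a: 2 show ?thesis unfolding 2 tr_v tr_o[OF a] using A[OF a] by simp
      qed
    next
      case 3
      consider "y = u" | "y = v" | "y \<noteq> u" "y \<noteq> v" by blast
      then show ?thesis
      proof cases
        case a: 1 show ?thesis unfolding a tr_u tr_o[OF 3] using A[OF 3] C[of x u] C[of x v] by simp
      next
        case a: 2 show ?thesis unfolding a tr_v tr_o[OF 3] using A[OF 3] C[of x u] C[of x v] by simp
      next
        case a: 3 show ?thesis unfolding tr_o[OF 3] tr_o[OF a] by simp
      qed
    qed
  qed
qed

definition img :: "('a \<Rightarrow> 'a) \<Rightarrow> 'a set set \<Rightarrow> 'a set set" where
  "img f M = (\<lambda>e. f ` e) ` M"

lemma cov_img: "covered (img f M) = f ` covered M"
  unfolding covered_def img_def by auto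

lemma img_img: "(\<forall>x. f (f x) = x) \<Longrightarrow> img f (img f M) = M"
  unfolding img_def by (simp add: image_image)

lemma img_mono: "A \<subseteq> B \<Longrightarrow> img f A \<subseteq> img f B"
  unfolding img_def by (rule image_mono)

lemma iso_im:
  assumes sg: "sg E" and inv: "\<forall>x. f (f x) = x" and sym: "\<forall>x y. ({f x, f y} \<in> E) = ({x,y} \<in> E)"
    and im: "induced_matching E M"
  shows "induced_matching E (img f M)"
proof -
  have inj: "inj f"
  proof (rule injI)
    fix a b assume "f a = f b"
    then have "f (f a) = f (f b)" by simp
    then show "a = b" using inv by simp
  qed
  have ME: "M \<subseteq> E" using im_subE[OF im] .
  have sub: "img f M \<subseteq> E"
  proof
    fix e' assume "e' \<in> img f M"
    then obtain e where e: "e \<in> M" "e' = f ` e" unfolding img_def by blast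
    then obtain x y where xy: "e = {x,y}" using sg ME unfolding sg_def by blast
    then have "{x,y} \<in> E" using e ME by blast
    then have "{f x, f y} \<in> E" using sym by blast
    then show "e' \<in> E" using e xy by simp
  qed
  have disj: "\<forall>e\<in>img f M. \<forall>g\<in>img f M. e \<noteq> g \<longrightarrow> e \<inter> g = {}"
  proof (intro ballI impI)
    fix e' g' assume a: "e' \<in> img f M" "g' \<in> img f M" "e' \<noteq> g'"
    then obtain e g where eg: "e \<in> M" "g \<in> M" "e' = f ` e" "g' = f ` g" unfolding img_def by blast
    then have "e \<noteq> g" using a(3) by blast
    then have "e \<inter> g = {}" using im eg unfolding induced_matching_def matching_def by blast
    then have "f ` (e \<inter> g) = {}" by simp
    moreover have "f ` (e \<inter> g) = f ` e \<inter> f ` g" using inj by (simp add: image_Int)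
    ultimately show "e' \<inter> g' = {}" using eg by simp
  qed
  have card1: "card (nbhd E z \<inter> covered (img f M)) = 1" if z: "z \<in> covered (img f M)" for z
  proof -
    have "z \<in> f ` covered M" using z cov_img[of f M] by simp
    then obtain x where x: "x \<in> covered M" "z = f x" by blast
    have eqn: "nbhd E (f x) \<inter> f ` covered M = f ` (nbhd E x \<inter> covered M)"
    proof
      show "nbhd E (f x) \<inter> f ` covered M \<subseteq> f ` (nbhd E x \<inter> covered M)"
      proof
        fix w assume w: "w \<in> nbhd E (f x) \<inter> f ` covered M"
        then obtain y where y: "y \<in> covered M" "w = f y" by blast
        have "{f x, f y} \<in> E" using w y unfolding nbhd_def by simp
        then have "{x,y} \<in> E" using sym by blast
        then have "y \<in> nbhd E x \<inter> covered M" using y unfolding nbhd_def by simp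
        then show "w \<in> f ` (nbhd E x \<inter> covered M)" using y by blast
      qed
      show "f ` (nbhd E x \<inter> covered M) \<subseteq> nbhd E (f x) \<inter> f ` covered M"
      proof
        fix w assume "w \<in> f ` (nbhd E x \<inter> covered M)"
        then obtain y where y: "y \<in> nbhd E x" "y \<in> covered M" "w = f y" by blast
        have "{x,y} \<in> E" using y unfolding nbhd_def by simp
        then have "{f x, f y} \<in> E" using sym by blast
        then show "w \<in> nbhd E (f x) \<inter> f ` covered M" using y unfolding nbhd_def by simp
      qed
    qed
    have "card (f ` (nbhd E x \<inter> covered M)) = card (nbhd E x \<inter> covered M)"
      by (rule card_image[OF inj_on_subset[OF inj subset_UNIV]])
    also have "\<dots> = 1" using im x(1) unfolding induced_matching_def by blast
    finally show ?thesis using eqn x(2) cov_img[of f M] by simp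
  qed
  show ?thesis unfolding induced_matching_def matching_def using sub disj card1 by blast
qed

lemma iso_mim:
  assumes sg: "sg E" and inv: "\<forall>x. f (f x) = x" and sym: "\<forall>x y. ({f x, f y} \<in> E) = ({x,y} \<in> E)"
    and m: "maximal_induced_matching E M"
  shows "maximal_induced_matching E (img f M)"
proof -
  have im0: "induced_matching E M" using m unfolding maximal_induced_matching_def by blast
  have im: "induced_matching E (img f M)" using iso_im[OF sg inv sym im0] .
  have "\<not> (\<exists>M'. induced_matching E M' \<and> img f M \<subset> M')"
  proof
    assume "\<exists>M'. induced_matching E M' \<and> img f M \<subset> M'"
    then obtain M' where M': "induced_matching E M'" "img f M \<subset> M'" by blast
    have i2: "induced_matching E (img f M')" using iso_im[OF sg inv sym M'(1)] .
    have "img f (img f M) \<subseteq> img f M'" using M'(2) img_mono by blast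
    then have s: "M \<subseteq> img f M'" using img_img[OF inv] by metis
    have "M \<noteq> img f M'"
    proof
      assume "M = img f M'"
      then have "img f M = M'" using img_img[OF inv] by metis
      then show False using M'(2) by blast
    qed
    then have "M \<subset> img f M'" using s by blast
    then show False using m i2 unfolding maximal_induced_matching_def by blast
  qed
  then show ?thesis using im unfolding maximal_induced_matching_def by blast
qed

lemma lift_back:
  assumes sg: "sg E" and m: "maximal_induced_matching E M" and uM: "u \<notin> covered M"
    and ie: "induced_matching (shift E u v) (insert e M)" and ue: "u \<notin> e" and eM: "e \<notin> M"
  shows False
proof -
  have sub: "insert e M \<subseteq> shift E u v" using im_subE[OF ie] .
  have imE: "induced_matching E M" using m unfolding maximal_induced_matching_def by blast
  have eE: "e \<in> E" using shift_sub1[of e E u v] sub ue by blast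
  have sE: "insert e M \<subseteq> E" using eE im_subE[OF imE] by blast
  have uc: "u \<notin> covered (insert e M)" using uM ue unfolding covered_def by blast
  have ag: "\<forall>x\<in>covered (insert e M). \<forall>y\<in>covered (insert e M). ({x,y} \<in> shift E u v) = ({x,y} \<in> E)"
  proof (intro ballI)
    fix x y assume "x \<in> covered (insert e M)" "y \<in> covered (insert e M)"
    then have "u \<notin> {x,y}" using uc by blast
    then show "({x,y} \<in> shift E u v) = ({x,y} \<in> E)" by (rule shift_other)
  qed
  have "induced_matching E (insert e M)" using im_transfer[OF ie sE ag] .
  then show False using m eM mim_iff[OF sg] by blast
qed

lemma add_uv:
  assumes sg: "sg E" and im: "induced_matching E M" and uv: "{u,v} \<in> E"
    and uM: "u \<notin> covered M" and vM: "v \<notin> covered M"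
    and nb: "\<forall>w\<in>covered M. {u,w} \<notin> E \<and> {v,w} \<notin> E"
  shows "induced_matching E (insert {u,v} M)"
proof -
  have uvne: "u \<noteq> v" using uv sg_single[OF sg, of u] by auto
  have ME: "M \<subseteq> E" using im_subE[OF im] .
  have sE: "insert {u,v} M \<subseteq> E" using ME uv by blast
  have disj: "\<forall>e\<in>insert {u,v} M. \<forall>f\<in>insert {u,v} M. e \<noteq> f \<longrightarrow> e \<inter> f = {}"
  proof -
    have "\<forall>f\<in>M. {u,v} \<inter> f = {}" using uM vM unfolding covered_def by blast
    moreover have "\<forall>e\<in>M. \<forall>f\<in>M. e \<noteq> f \<longrightarrow> e \<inter> f = {}"
      using im unfolding induced_matching_def matching_def by blast
    ultimately show ?thesis by blast
  qed
  have cov: "covered (insert {u,v} M) = {u,v} \<union> covered M" unfolding covered_def by auto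
  have card1: "card (nbhd E x \<inter> covered (insert {u,v} M)) = 1"
    if x: "x \<in> covered (insert {u,v} M)" for x
  proof -
    consider "x = u" | "x = v" | "x \<in> covered M" using x cov by blast
    then show ?thesis
    proof cases
      case 1
      have "nbhd E x \<inter> covered (insert {u,v} M) = {v}"
      proof
        show "{v} \<subseteq> nbhd E x \<inter> covered (insert {u,v} M)" using 1 uv cov unfolding nbhd_def by blast
        show "nbhd E x \<inter> covered (insert {u,v} M) \<subseteq> {v}"
        proof
          fix z assume z: "z \<in> nbhd E x \<inter> covered (insert {u,v} M)"
          then have zE: "{u,z} \<in> E" using 1 unfolding nbhd_def by simp
          have "z \<noteq> u" using zE sg_single[OF sg, of u] by auto
          moreover have "z \<notin> covered M" using zE nb by blast
          ultimately show "z \<in> {v}" using z cov by blast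
        qed
      qed
      then show ?thesis by simp
    next
      case 2
      have vu: "{v,u} \<in> E" using uv by (simp add: insert_commute)
      have "nbhd E x \<inter> covered (insert {u,v} M) = {u}"
      proof
        show "{u} \<subseteq> nbhd E x \<inter> covered (insert {u,v} M)" using 2 vu cov unfolding nbhd_def by blast
        show "nbhd E x \<inter> covered (insert {u,v} M) \<subseteq> {u}"
        proof
          fix z assume z: "z \<in> nbhd E x \<inter> covered (insert {u,v} M)"
          then have zE: "{v,z} \<in> E" using 2 unfolding nbhd_def by simp
          have "z \<noteq> v" using zE sg_single[OF sg, of v] by auto
          moreover have "z \<notin> covered M" using zE nb by blast
          ultimately show "z \<in> {u}" using z cov by blast
        qed
      qed
      then show ?thesis by simp
    next
      case 3
      have xu: "{x,u} \<notin> E" "{x,v} \<notin> E" using nb 3 by (auto simp: insert_commute)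
      have "nbhd E x \<inter> covered (insert {u,v} M) = nbhd E x \<inter> covered M"
        using xu cov unfolding nbhd_def by auto
      then show ?thesis using im 3 unfolding induced_matching_def by simp
    qed
  qed
  show ?thesis unfolding induced_matching_def matching_def using sE disj card1 by blast
qed

lemma finite_shift: "sg E \<Longrightarrow> finite E \<Longrightarrow> finite (shift E u v)"
proof -
  assume sg: "sg E" and f: "finite E"
  have fe: "\<forall>e\<in>E. finite e" using sg unfolding sg_def by auto
  have fU: "finite (\<Union>E)" using f fe by blast
  have "shift E u v \<subseteq> E \<union> (\<lambda>y. {u,y}) ` (\<Union>E)"
  proof
    fix e assume "e \<in> shift E u v"
    then consider "e \<in> E" | y where "e = {u,y}" "y \<in> nbhd E v - cnbhd E u" unfolding shift_mem by blast
    then show "e \<in> E \<union> (\<lambda>y. {u,y}) ` (\<Union>E)"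
    proof cases
      case 1 then show ?thesis by blast
    next
      case 2
      then have "{v,y} \<in> E" unfolding nbhd_def by simp
      then have "y \<in> \<Union>E" by blast
      then show ?thesis using 2 by blast
    qed
  qed
  then show ?thesis using f fU by (meson finite_UnI finite_imageI finite_subset)
qed


lemma half:
  assumes G: "simple_graph V E" and uv: "{u,v} \<in> E"
    and hA: "\<not> (\<exists>M\<in>MIM E. covered M \<subseteq> (nbhd E u - cnbhd E v) \<union> (V - (cnbhd E u \<union> cnbhd E v))
               \<and> covered M \<inter> (nbhd E u - cnbhd E v) \<noteq> {})"
  shows "2 * card {M\<in>MIM E. v \<in> covered M \<and> u \<notin> covered M}
         + card {M\<in>MIM E. v \<notin> covered M \<and> u \<notin> covered M}
         + card {M\<in>MIM E. {u,v} \<in> M} \<le> card (MIM (shift E u v))"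
proof -
  define H where "H = shift E u v"
  define Q where "Q = {M\<in>MIM E. v \<in> covered M \<and> u \<notin> covered M}"
  define R where "R = {M\<in>MIM E. v \<notin> covered M \<and> u \<notin> covered M}"
  define T where "T = {M\<in>MIM E. {u,v} \<in> M}"
  define ext where "ext M = (SOME M'. M \<subseteq> M' \<and> maximal_induced_matching H M')" for M
  define sw where "sw = img (tr u v)"
  have QD: "\<And>M. (M \<in> Q) = (M \<in> MIM E \<and> v \<in> covered M \<and> u \<notin> covered M)" unfolding Q_def by simp
  have RD: "\<And>M. (M \<in> R) = (M \<in> MIM E \<and> v \<notin> covered M \<and> u \<notin> covered M)" unfolding R_def by simp
  have TD: "\<And>M. (M \<in> T) = (M \<in> MIM E \<and> {u,v} \<in> M)" unfolding T_def by simp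
  have sg: "sg E" using sg_simple[OF G] .
  have sgH: "sg H" unfolding H_def using sg_shift[OF sg] .
  have finE: "finite E" using fin_simple[OF G] .
  have finH: "finite H" unfolding H_def using finite_shift[OF sg finE] .
  have uvne: "u \<noteq> v" using uv sg_single[OF sg, of u] by auto
  have vu: "{v,u} \<in> E" using uv by (simp add: insert_commute)
  have uvH: "{u,v} \<in> H" unfolding H_def using shift_u[OF sg uv, of v] uvne by simp
  have vuH: "{v,u} \<in> H" using uvH by (simp add: insert_commute)
  have covV: "covered M \<subseteq> V" if "M \<subseteq> E" for M
  proof
    fix x assume "x \<in> covered M"
    then obtain e where e: "e \<in> M" "x \<in> e" unfolding covered_def by blast
    then have "e \<in> E" using that by blast
    then obtain a b where "e = {a,b}" "a \<in> V" "b \<in> V" using G unfolding simple_graph_def by blast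
    then show "x \<in> V" using e(2) by blast
  qed
  have mimE1: "maximal_induced_matching E M" if "M \<in> MIM E" for M
    using that unfolding MIM_def by simp
  have mimE2: "induced_matching E M" if "M \<in> MIM E" for M
    using mimE1[OF that] unfolding maximal_induced_matching_def by simp
  have mimE: "maximal_induced_matching E M" "induced_matching E M" "M \<subseteq> E" if "M \<in> MIM E" for M
    using mimE1[OF that] mimE2[OF that] im_subE[OF mimE2[OF that]] by simp_all

  have QH: "Q \<subseteq> MIM H"
  proof
    fix M assume "M \<in> Q"
    then have m: "maximal_induced_matching E M" "induced_matching E M" "M \<subseteq> E"
      and vc: "v \<in> covered M" and uc: "u \<notin> covered M" using mimE[of M] QD[of M] by simp_all
    have MH: "M \<subseteq> H"
    proof
      fix e assume "e \<in> M"
      then have "u \<notin> e" using uc unfolding covered_def by blast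
      moreover have "e \<in> E" using \<open>e \<in> M\<close> m(3) by (rule subsetD[rotated])
      ultimately show "e \<in> H" unfolding H_def by (rule shift_sub2[rotated])
    qed
    have ag: "\<forall>x\<in>covered M. \<forall>y\<in>covered M. ({x,y} \<in> E) = ({x,y} \<in> H)"
    proof (intro ballI)
      fix x y assume "x \<in> covered M" "y \<in> covered M"
      then have "u \<notin> {x,y}" using uc by blast
      then show "({x,y} \<in> E) = ({x,y} \<in> H)" unfolding H_def using shift_other[of u x y E v] by simp
    qed
    have imH: "induced_matching H M" using im_transfer[OF m(2) MH ag] .
    have "\<forall>e. e \<notin> M \<longrightarrow> \<not> induced_matching H (insert e M)"
    proof (intro allI impI notI)
      fix e assume eM: "e \<notin> M" and ie: "induced_matching H (insert e M)"
      show False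
      proof (cases "u \<in> e")
        case False
        then show False using lift_back[OF sg m(1) uc, of v e] ie eM unfolding H_def by simp
      next
        case True
        obtain f where f: "f \<in> M" "v \<in> f" using vc unfolding covered_def by blast
        obtain w where w: "f = {v,w}" "v \<noteq> w" using sg_other[OF sg _ f(2)] f(1) m(3) by blast
        have wc: "w \<in> covered M" using f w unfolding covered_def by blast
        then have wu: "w \<noteq> u" using uc by blast
        have wH: "{v,w} \<in> H" using MH f w by blast
        have c: "v \<in> covered (insert e M)" "u \<in> covered (insert e M)" "w \<in> covered (insert e M)"
          using vc wc True unfolding covered_def by blast+
        have "u = w" using im_two[OF ie c(1) c(2) c(3) vuH wH] .
        then show False using wu by simp
      qed
    qed
    then have "maximal_induced_matching H M" using mim_iff[OF sgH] imH by blast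
    then show "M \<in> MIM H" unfolding MIM_def by simp
  qed

  have trinv: "\<forall>x. tr u v (tr u v x) = x" using tr_tr by metis
  have trsym: "\<forall>x y. ({tr u v x, tr u v y} \<in> H) = ({x,y} \<in> H)"
    unfolding H_def using shift_tr[OF sg uv] by blast
  have swQH: "sw ` Q \<subseteq> MIM H"
  proof
    fix M' assume "M' \<in> sw ` Q"
    then obtain M where "M \<in> Q" "M' = sw M" by blast
    then have "maximal_induced_matching H M" using QH unfolding MIM_def by blast
    then have "maximal_induced_matching H (sw M)" unfolding sw_def using iso_mim[OF sgH trinv trsym] by blast
    then show "M' \<in> MIM H" using \<open>M' = sw M\<close> unfolding MIM_def by simp
  qed
  have inj_sw: "inj_on sw Q"
  proof (rule inj_onI)
    fix A B assume "A \<in> Q" "B \<in> Q" "sw A = sw B"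
    then have "img (tr u v) (img (tr u v) A) = img (tr u v) (img (tr u v) B)" unfolding sw_def by simp
    then show "A = B" unfolding img_img[OF trinv] .
  qed
  have cov_sw: "covered (sw M) = tr u v ` covered M" for M unfolding sw_def by (rule cov_img)
  have swQ_prop: "u \<in> covered M' \<and> v \<notin> covered M'" if M'Q: "M' \<in> sw ` Q" for M'
  proof -
    obtain M where M: "M \<in> Q" "M' = sw M" using M'Q by blast
    then have vc: "v \<in> covered M" and uc: "u \<notin> covered M" using QD[of M] by simp_all
    have "tr u v v \<in> tr u v ` covered M" using vc by (rule imageI)
    then have "u \<in> covered M'" using M(2) cov_sw[of M] tr_v[of u v] by simp
    moreover have "v \<notin> covered M'"
    proof
      assume "v \<in> covered M'"
      then have "v \<in> tr u v ` covered M" using M(2) cov_sw[of M] by simp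
      then obtain x where x0: "v = tr u v x" and x1: "x \<in> covered M" by (rule imageE)
      have x: "x \<in> covered M" "tr u v x = v" using x0 x1 by simp_all
      have "x = u"
      proof (rule ccontr)
        assume "x \<noteq> u"
        then show False using x(2) uvne unfolding tr_def by (cases "x = v") simp_all
      qed
      then show False using x uc by simp
    qed
    ultimately show ?thesis by blast
  qed

  have RH: "R \<subseteq> MIM H"
  proof
    fix M assume "M \<in> R"
    then have m: "maximal_induced_matching E M" "induced_matching E M" "M \<subseteq> E" "M \<in> MIM E"
      and vc: "v \<notin> covered M" and uc: "u \<notin> covered M" using mimE[of M] RD[of M] by simp_all
    have "\<exists>w\<in>covered M. {v,w} \<in> E"
    proof (rule ccontr)
      assume nv: "\<not> (\<exists>w\<in>covered M. {v,w} \<in> E)"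
      show False
      proof (cases "\<exists>w\<in>covered M. {u,w} \<in> E")
        case True
        then obtain w where w: "w \<in> covered M" "{u,w} \<in> E" by blast
        have "w \<in> nbhd E u - cnbhd E v" using w nv vc unfolding nbhd_def cnbhd_def by auto
        moreover have "covered M \<subseteq> (nbhd E u - cnbhd E v) \<union> (V - (cnbhd E u \<union> cnbhd E v))"
        proof
          fix z assume z: "z \<in> covered M"
          then have zV: "z \<in> V" using covV m(3) by blast
          have "z \<noteq> u" "z \<noteq> v" "{v,z} \<notin> E" using z uc vc nv by blast+
          then show "z \<in> (nbhd E u - cnbhd E v) \<union> (V - (cnbhd E u \<union> cnbhd E v))"
            using zV unfolding nbhd_def cnbhd_def by auto
        qed
        ultimately show False using hA m(4) w(1) by blast
      next
        case False
        have "induced_matching E (insert {u,v} M)"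
          using add_uv[OF sg m(2) uv uc vc] False nv by blast
        moreover have "{u,v} \<notin> M" using uc unfolding covered_def by blast
        ultimately show False using m(1) mim_iff[OF sg] by blast
      qed
    qed
    then obtain w where w: "w \<in> covered M" "{v,w} \<in> E" by blast
    have wu: "w \<noteq> u" using w uc by blast
    have uwH: "{u,w} \<in> H" unfolding H_def using shift_u[OF sg uv wu] w by simp
    have MH: "M \<subseteq> H"
    proof
      fix e assume "e \<in> M"
      then have "u \<notin> e" using uc unfolding covered_def by blast
      moreover have "e \<in> E" using \<open>e \<in> M\<close> m(3) by (rule subsetD[rotated])
      ultimately show "e \<in> H" unfolding H_def by (rule shift_sub2[rotated])
    qed
    have ag: "\<forall>x\<in>covered M. \<forall>y\<in>covered M. ({x,y} \<in> E) = ({x,y} \<in> H)"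
    proof (intro ballI)
      fix x y assume "x \<in> covered M" "y \<in> covered M"
      then have "u \<notin> {x,y}" using uc by blast
      then show "({x,y} \<in> E) = ({x,y} \<in> H)" unfolding H_def using shift_other[of u x y E v] by simp
    qed
    have imH: "induced_matching H M" using im_transfer[OF m(2) MH ag] .
    have "\<forall>e. e \<notin> M \<longrightarrow> \<not> induced_matching H (insert e M)"
    proof (intro allI impI notI)
      fix e assume eM: "e \<notin> M" and ie: "induced_matching H (insert e M)"
      show False
      proof (cases "u \<in> e")
        case False
        then show False using lift_back[OF sg m(1) uc, of v e] ie eM unfolding H_def by simp
      next
        case True
        have eH: "e \<in> H" using im_subE[OF ie] by blast
        obtain x where x: "e = {u,x}" "u \<noteq> x" using sg_other[OF sgH eH True] by blast
        have xH: "{u,x} \<in> H" using eH x by simp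
        have c: "u \<in> covered (insert e M)" "w \<in> covered (insert e M)" "x \<in> covered (insert e M)"
          using w x unfolding covered_def by blast+
        have "w = x" using im_two[OF ie c uwH xH] .
        obtain f where f: "f \<in> M" "w \<in> f" using w(1) unfolding covered_def by blast
        have "e = f" using im_match[OF ie, of e f w] f x \<open>w = x\<close> by blast
        then show False using eM f by blast
      qed
    qed
    then have "maximal_induced_matching H M" using mim_iff[OF sgH] imH by blast
    then show "M \<in> MIM H" unfolding MIM_def by simp
  qed

  have Tgood: "{u,y} \<notin> E \<and> {v,y} \<notin> E" if "M \<in> T" "y \<in> covered M" "y \<noteq> u" "y \<noteq> v" for M y
  proof -
    have im: "induced_matching E M" and uvM: "{u,v} \<in> M" using that mimE[of M] TD[of M] by simp_all
    have cu: "u \<in> covered M" "v \<in> covered M" using uvM unfolding covered_def by blast+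
    have "{u,y} \<notin> E"
    proof
      assume "{u,y} \<in> E"
      then have "v = y" using im_two[OF im cu(1) cu(2) that(2) uv] by blast
      then show False using that by simp
    qed
    moreover have "{v,y} \<notin> E"
    proof
      assume "{v,y} \<in> E"
      then have "u = y" using im_two[OF im cu(2) cu(1) that(2) vu] by blast
      then show False using that by simp
    qed
    ultimately show ?thesis by blast
  qed
  have agu: "({u,y} \<in> E) = ({u,y} \<in> H)" if "y \<noteq> u \<Longrightarrow> y \<noteq> v \<Longrightarrow> {u,y} \<notin> E \<and> {v,y} \<notin> E" for y
  proof (cases "y = u")
    case True
    then show ?thesis using sg_single[OF sg, of u] sg_single[OF sgH, of u] by simp
  next
    case False
    then show ?thesis unfolding H_def using shift_u[OF sg uv False] that uv by auto
  qed
  have agS: "({x,y} \<in> E) = ({x,y} \<in> H)"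
    if S: "\<forall>z\<in>S. z \<noteq> u \<longrightarrow> z \<noteq> v \<longrightarrow> {u,z} \<notin> E \<and> {v,z} \<notin> E" "x \<in> S" "y \<in> S" for S x y
  proof -
    consider "x = u" | "y = u" | "u \<notin> {x,y}" by blast
    then show ?thesis
    proof cases
      case 1 then show ?thesis using agu S by blast
    next
      case 2
      have "({y,x} \<in> E) = ({y,x} \<in> H)" using agu S 2 by blast
      then show ?thesis by (simp add: insert_commute)
    next
      case 3 then show ?thesis unfolding H_def using shift_other[of u x y E v] by simp
    qed
  qed
  have Tprop: "induced_matching H M" if "M \<in> T" for M
  proof -
    have m: "induced_matching E M" "M \<subseteq> E" and uvM: "{u,v} \<in> M" using that mimE[of M] TD[of M] by simp_all
    have MH: "M \<subseteq> H"
    proof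
      fix e assume e: "e \<in> M"
      show "e \<in> H"
      proof (cases "u \<in> e")
        case True
        then have "e = {u,v}" using im_match[OF m(1) e uvM] by blast
        then show ?thesis using uvH by simp
      next
        case False
        moreover have "e \<in> E" using e m(2) by (rule subsetD[rotated])
        ultimately show ?thesis unfolding H_def by (rule shift_sub2[rotated])
      qed
    qed
    have ag: "\<forall>x\<in>covered M. \<forall>y\<in>covered M. ({x,y} \<in> E) = ({x,y} \<in> H)"
      using agS[of "covered M"] Tgood[OF that] by blast
    show ?thesis using im_transfer[OF m(1) MH ag] .
  qed
  have ext: "M \<subseteq> ext M \<and> maximal_induced_matching H (ext M)" if "M \<in> T" for M
  proof -
    have "\<exists>M'. M \<subseteq> M' \<and> maximal_induced_matching H M'" using ext_exists[OF finH Tprop[OF that]] .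
    then show ?thesis unfolding ext_def by (rule someI_ex)
  qed
  have extH: "ext ` T \<subseteq> MIM H" using ext unfolding MIM_def by blast
  have inj_ext: "inj_on ext T"
  proof -
    have sub: "M1 \<subseteq> M2" if T1: "M1 \<in> T" and T2: "M2 \<in> T" and eq: "ext M1 = ext M2" for M1 M2
    proof
      fix e assume e1: "e \<in> M1"
      show "e \<in> M2"
      proof (rule ccontr)
        assume e2: "e \<notin> M2"
        have m2: "maximal_induced_matching E M2" "M2 \<subseteq> E" using T2 mimE[of M2] TD[of M2] by simp_all
        have eE: "e \<in> E" using T1 e1 mimE[of M1] TD[of M1] by blast
        have "insert e M2 \<subseteq> ext M2" using ext[OF T1] ext[OF T2] e1 eq by blast
        then have ieH: "induced_matching H (insert e M2)"
          using im_sub[OF sgH] ext[OF T2] unfolding maximal_induced_matching_def by blast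
        have sE: "insert e M2 \<subseteq> E" using eE m2(2) by blast
        have good: "\<forall>z\<in>covered (insert e M2). z \<noteq> u \<longrightarrow> z \<noteq> v \<longrightarrow> {u,z} \<notin> E \<and> {v,z} \<notin> E"
        proof (intro ballI impI)
          fix z assume z: "z \<in> covered (insert e M2)" "z \<noteq> u" "z \<noteq> v"
          then consider "z \<in> covered M1" | "z \<in> covered M2" using e1 unfolding covered_def by blast
          then show "{u,z} \<notin> E \<and> {v,z} \<notin> E"
          proof cases
            case 1 show ?thesis by (rule Tgood[OF T1 1 z(2) z(3)])
          next
            case 2 show ?thesis by (rule Tgood[OF T2 2 z(2) z(3)])
          qed
        qed
        have ag: "\<forall>x\<in>covered (insert e M2). \<forall>y\<in>covered (insert e M2). ({x,y} \<in> H) = ({x,y} \<in> E)"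
          using agS[OF good] by simp
        have "induced_matching E (insert e M2)" using im_transfer[OF ieH sE ag] .
        then show False using m2(1) e2 mim_iff[OF sg] by blast
      qed
    qed
    show ?thesis
    proof (rule inj_onI)
      fix A B assume "A \<in> T" "B \<in> T" "ext A = ext B"
      then show "A = B" using sub[of A B] sub[of B A] by blast
    qed
  qed
  have extprop: "u \<in> covered M' \<and> v \<in> covered M'" if M'T: "M' \<in> ext ` T" for M'
  proof -
    obtain M where "M \<in> T" "M' = ext M" using M'T by blast
    then have "{u,v} \<in> M'" using ext TD by blast
    then show ?thesis unfolding covered_def by blast
  qed

  have finMH: "finite (MIM H)" using finite_MIM[OF finH] .
  have fQ: "finite Q" using QH finMH finite_subset by blast
  have fsQ: "finite (sw ` Q)" using fQ by blast
  have fR: "finite R" using RH finMH finite_subset by blast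
  have fT: "finite (ext ` T)" using extH finMH finite_subset by blast
  have fT0: "finite T" using fT inj_ext finite_image_iff by blast
  have d1: "Q \<inter> sw ` Q = {}" using swQ_prop QD by blast
  have d2: "(Q \<union> sw ` Q) \<inter> R = {}" using swQ_prop QD RD by blast
  have d3: "(Q \<union> sw ` Q \<union> R) \<inter> ext ` T = {}" using swQ_prop extprop QD RD by blast
  have "card (Q \<union> sw ` Q \<union> R \<union> ext ` T) = card Q + card (sw ` Q) + card R + card (ext ` T)"
    using fQ fsQ fR fT d1 d2 d3 by (simp add: card_Un_disjoint)
  also have "card (sw ` Q) = card Q" using card_image[OF inj_sw] .
  also have "card (ext ` T) = card T" using card_image[OF inj_ext] .
  finally have "card (Q \<union> sw ` Q \<union> R \<union> ext ` T) = 2 * card Q + card R + card T" by simp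
  moreover have "card (Q \<union> sw ` Q \<union> R \<union> ext ` T) \<le> card (MIM H)"
    using QH swQH RH extH finMH by (intro card_mono) auto
  ultimately show ?thesis unfolding Q_def R_def T_def H_def by simp
qed


theorem lemma2p1:
  fixes V :: "'a set" and E :: "'a set set" and u v :: 'a
  assumes G: "simple_graph V E"
    and uv: "{u, v} \<in> E"
  defines "W1 \<equiv> nbhd E u - cnbhd E v"
    and "W2 \<equiv> nbhd E u \<inter> nbhd E v"
    and "W3 \<equiv> nbhd E v - cnbhd E u"
    and "W4 \<equiv> V - (cnbhd E u \<union> cnbhd E v)"
  assumes h1: "\<not> (\<exists>M\<in>MIM E. covered M \<subseteq> W1 \<union> W4 \<and> covered M \<inter> W1 \<noteq> {})"
    and h3: "\<not> (\<exists>M\<in>MIM E. covered M \<subseteq> W3 \<union> W4 \<and> covered M \<inter> W3 \<noteq> {})"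
  shows "card (MIM (shift E u v)) \<ge> card (MIM E) \<or> card (MIM (shift E v u)) \<ge> card (MIM E)"
proof -
  define P where "P = {M\<in>MIM E. u \<in> covered M \<and> v \<notin> covered M}"
  define Q where "Q = {M\<in>MIM E. v \<in> covered M \<and> u \<notin> covered M}"
  define R where "R = {M\<in>MIM E. v \<notin> covered M \<and> u \<notin> covered M}"
  define T where "T = {M\<in>MIM E. {u,v} \<in> M}"
  have sg: "sg E" using sg_simple[OF G] .
  have finE: "finite E" using fin_simple[OF G] .
  have vu: "{v,u} \<in> E" using uv by (simp add: insert_commute)
  have hA: "\<not> (\<exists>M\<in>MIM E. covered M \<subseteq> (nbhd E u - cnbhd E v) \<union> (V - (cnbhd E u \<union> cnbhd E v))
               \<and> covered M \<inter> (nbhd E u - cnbhd E v) \<noteq> {})"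
    using h1 unfolding W1_def W4_def .
  have W4': "V - (cnbhd E v \<union> cnbhd E u) = W4" unfolding W4_def by blast
  have hB: "\<not> (\<exists>M\<in>MIM E. covered M \<subseteq> (nbhd E v - cnbhd E u) \<union> (V - (cnbhd E v \<union> cnbhd E u))
               \<and> covered M \<inter> (nbhd E v - cnbhd E u) \<noteq> {})"
    using h3 unfolding W4' W3_def .
  have H1: "2 * card Q + card R + card T \<le> card (MIM (shift E u v))"
    using half[OF G uv hA] unfolding Q_def R_def T_def .
  have R': "{M\<in>MIM E. u \<notin> covered M \<and> v \<notin> covered M} = R" unfolding R_def by blast
  have T': "{M\<in>MIM E. {v,u} \<in> M} = T" unfolding T_def by (simp add: insert_commute)
  have H2: "2 * card P + card R + card T \<le> card (MIM (shift E v u))"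
    using half[OF G vu hB] unfolding R' T' P_def .
  have cover: "MIM E \<subseteq> P \<union> Q \<union> R \<union> T"
  proof
    fix M assume M: "M \<in> MIM E"
    then have im: "induced_matching E M" unfolding MIM_def maximal_induced_matching_def by simp
    have ME: "M \<subseteq> E" using im_subE[OF im] .
    show "M \<in> P \<union> Q \<union> R \<union> T"
    proof (cases "u \<in> covered M \<and> v \<in> covered M")
      case True
      then obtain f where f: "f \<in> M" "u \<in> f" unfolding covered_def by blast
      have fE: "f \<in> E" using f(1) ME by blast
      obtain x where x: "f = {u,x}" "u \<noteq> x" using sg_other[OF sg fE f(2)] by blast
      have xc: "x \<in> covered M" using f x unfolding covered_def by blast
      have "v = x" using im_two[OF im, of u v x] True xc uv fE x(1) by blast
      then have "{u,v} \<in> M" using f x by simp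
      then show ?thesis using M unfolding T_def by blast
    next
      case False
      then show ?thesis using M unfolding P_def Q_def R_def by blast
    qed
  qed
  have finM: "finite (MIM E)" using finite_MIM[OF finE] .
  have fP: "finite P" "finite Q" "finite R" "finite T"
    unfolding P_def Q_def R_def T_def using finM by simp_all
  have "card (MIM E) \<le> card (P \<union> Q \<union> R \<union> T)"
    using cover fP by (intro card_mono) simp_all
  also have "\<dots> \<le> card (P \<union> Q \<union> R) + card T" by (rule card_Un_le)
  also have "card (P \<union> Q \<union> R) \<le> card (P \<union> Q) + card R" by (rule card_Un_le)
  also have "card (P \<union> Q) \<le> card P + card Q" by (rule card_Un_le)
  finally have "card (MIM E) \<le> card P + card Q + card R + card T" by simp
  then show ?thesis using H1 H2 by linarith
qed

end
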